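(* Let $K\ge 2$ and $0\le e_1\le\dots\le e_K<\infty$. For nonempty $I\subseteq\{1,\dots,K\}$ write $A(I):=\frac1{|I|}\sum_{i\in I}e_i$. For nonempty $R\subseteq\{1,\dots,K\}$ and $j\in\{1,\dots,|R|\}$ let \[ \mathrm{AV}^R(j):=\min_{I\subseteq\{1,\dots,K\}:\ |R\setminus I|<j}A(I), \] and let $R_j$ denote $R$ with its $j-1$ largest elements removed. Then \[ \mathrm{AV}^R(j)=\min_{0\le i\le K}A\bigl(R_j\cup\{1,\dots,i\}\bigr), \] where $\{1,\dots,0\}:=\emptyset$. In particular, for $r\in\{1,\dots,K\}$, $R=\{K-r+1,\dots,K\}$ and $j\in\{1,\dots,r\}$, \[ \mathrm{AV}^{R}(j)=\min_{0\le i\le K-r}\frac{s_i+\sigma_j}{i+r-j+1},\qquad s_i:=e_1+\dots+e_i,\ \ \sigma_j:=e_{K-r+1}+\dots+e_{K-j+1}. \]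
   Context: Here "the largest elements" of $R$ are its largest indices, which correspond to the largest values since $e_1\le\dots\le e_K$; $s_0:=0$. *)

theory Defs
  imports Main "HOL.Real"
begin

definition avg :: "(nat \<Rightarrow> real) \<Rightarrow> nat set \<Rightarrow> real" where
  "avg e I = (\<Sum>i\<in>I. e i) / real (card I)"

definition AV :: "nat \<Rightarrow> (nat \<Rightarrow> real) \<Rightarrow> nat set \<Rightarrow> nat \<Rightarrow> real" where
  "AV K e R j = Min {avg e I | I. I \<subseteq> {1..K} \<and> card (R - I) < j}"

text \<open>R with its m largest elements removed: keep x iff at least m elements
  of R are larger than x.\<close>
definition remove_largest :: "nat set \<Rightarrow> nat \<Rightarrow> nat set" where
  "remove_largest R m = {x \<in> R. m \<le> card {y \<in> R. x < y}}"

end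

theory Submission
  imports Defs
begin

lemma rl_sub: "remove_largest R m \<subseteq> R"
  unfolding remove_largest_def by auto

lemma rl_mono: "m \<le> m' \<Longrightarrow> remove_largest R m' \<subseteq> remove_largest R m"
  unfolding remove_largest_def by auto

lemma rl_down:
  fixes R :: "nat set"
  assumes "finite R" "x \<in> remove_largest R m" "y \<in> R" "y < x"
  shows "y \<in> remove_largest R m"
proof -
  have "{z\<in>R. x<z} \<subseteq> {z\<in>R. y<z}" using assms(4) by auto
  hence "card {z\<in>R. x<z} \<le> card {z\<in>R. y<z}" using assms(1) by (intro card_mono) auto
  thus ?thesis using assms(2,3) unfolding remove_largest_def by auto
qed

lemma rl_card:
  fixes R :: "nat set"
  assumes fin: "finite R" and m: "m \<le> card R"
  shows "card (remove_largest R m) = card R - m"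
proof -
  define c where "c x = card {y\<in>R. x<y}" for x
  have lt: "c x' < c x" if "x \<in> R" "x' \<in> R" "x < x'" for x x'
  proof -
    have "{y\<in>R. x'<y} \<subset> {y\<in>R. x<y}" using that by auto
    thus ?thesis unfolding c_def using fin by (intro psubset_card_mono) auto
  qed
  have inj: "inj_on c R"
  proof (rule inj_onI)
    fix x x' assume "x \<in> R" "x' \<in> R" "c x = c x'"
    thus "x = x'" using lt[of x x'] lt[of x' x] by (metis less_irrefl linorder_neq_iff)
  qed
  have cl: "c x < card R" if "x \<in> R" for x
  proof -
    have "{y\<in>R. x<y} \<subset> R" using that by auto
    thus ?thesis unfolding c_def using fin by (intro psubset_card_mono) auto
  qed
  have img: "c ` R = {..<card R}"
    by (rule card_subset_eq) (use cl inj in \<open>auto simp: card_image\<close>)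
  have F: "remove_largest R m = {x\<in>R. m \<le> c x}" unfolding remove_largest_def c_def by simp
  have "c ` {x\<in>R. m \<le> c x} = {m..<card R}"
  proof
    show "c ` {x\<in>R. m \<le> c x} \<subseteq> {m..<card R}" using cl by auto
    show "{m..<card R} \<subseteq> c ` {x\<in>R. m \<le> c x}"
    proof
      fix k assume k: "k \<in> {m..<card R}"
      then have "k \<in> c ` R" using img by auto
      then obtain x where "x \<in> R" "k = c x" by auto
      thus "k \<in> c ` {x\<in>R. m \<le> c x}" using k by auto
    qed
  qed
  moreover have "card (c ` {x\<in>R. m \<le> c x}) = card {x\<in>R. m \<le> c x}"
    by (rule card_image) (rule inj_on_subset[OF inj], auto)
  ultimately show ?thesis using F by simp
qed

lemma exch:
  fixes S :: "nat set" and e :: "nat \<Rightarrow> real"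
  assumes fin: "finite S" and TS: "T \<subseteq> S" and JS: "J \<subseteq> S" and cd: "card T = card J"
    and down: "\<forall>x\<in>T. \<forall>y\<in>S. y < x \<longrightarrow> y \<in> T"
    and mono: "\<forall>x\<in>S. \<forall>y\<in>S. x \<le> y \<longrightarrow> e x \<le> e y"
  shows "sum e T \<le> sum e J"
proof -
  have finT: "finite T" "finite J" using fin TS JS finite_subset by auto
  define A where "A = T - J"
  define B where "B = J - T"
  have cAB: "card A = card B"
  proof -
    have "card T = card (T \<inter> J) + card A" unfolding A_def using finT
      by (metis card_Int_Diff)
    moreover have "card J = card (J \<inter> T) + card B" unfolding B_def using finT
      by (metis card_Int_Diff)
    ultimately show ?thesis using cd by (simp add: Int_commute)
  qed
  have ab: "e a \<le> e b" if "a \<in> A" "b \<in> B" for a b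
  proof -
    have "\<not> b < a" using that down JS unfolding A_def B_def by auto
    hence "a \<le> b" by simp
    thus ?thesis using mono that TS JS unfolding A_def B_def by auto
  qed
  have sAB: "sum e A \<le> sum e B"
  proof (cases "A = {}")
    case True
    then have "B = {}" using cAB finT unfolding B_def by auto
    thus ?thesis using True by simp
  next
    case False
    have finA: "finite A" "finite B" using finT unfolding A_def B_def by auto
    define M where "M = Max (e ` A)"
    have MA: "M \<in> e ` A" unfolding M_def using False finA by (intro Max_in) auto
    have "sum e A \<le> of_nat (card A) * M"
      using finA by (intro sum_bounded_above) (auto simp: M_def)
    also have "\<dots> = of_nat (card B) * M" using cAB by simp
    also have "\<dots> \<le> sum e B"
      using MA ab by (intro sum_bounded_below) auto
    finally show ?thesis .
  qed
  have "sum e T = sum e (T \<inter> J) + sum e A" unfolding A_def using finT by (metis sum.Int_Diff)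
  moreover have "sum e J = sum e (J \<inter> T) + sum e B" unfolding B_def using finT by (metis sum.Int_Diff)
  ultimately show ?thesis using sAB by (simp add: Int_commute)
qed


lemma part1:
  fixes K :: nat and e :: "nat \<Rightarrow> real"
  assumes mono: "\<forall>i j. 1 \<le> i \<longrightarrow> i \<le> j \<longrightarrow> j \<le> K \<longrightarrow> e i \<le> e j"
    and R: "R \<noteq> {}" "R \<subseteq> {1..K}" and j: "1 \<le> j" "j \<le> card R"
  shows "AV K e R j = Min ((\<lambda>i. avg e (remove_largest R (j - 1) \<union> {1..i})) ` {0..K})"
proof -
  have finR: "finite R" using R finite_subset by blast
  define F where "F = remove_largest R (j - 1)"
  have cF: "card F = card R - (j - 1)" unfolding F_def using rl_card[OF finR] j by simp
  have FR: "F \<subseteq> R" unfolding F_def by (rule rl_sub)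
  have finF: "finite F" using FR finR finite_subset by blast
  have monoS: "\<forall>x\<in>S. \<forall>y\<in>S. x \<le> y \<longrightarrow> e x \<le> e y" if "S \<subseteq> {1..K}" for S
  proof (intro ballI impI)
    fix x y assume "x \<in> S" "y \<in> S" "x \<le> y"
    thus "e x \<le> e y" using mono that by (meson atLeastAtMost_iff subsetD)
  qed
  define X where "X = {avg e I | I. I \<subseteq> {1..K} \<and> card (R - I) < j}"
  define Y where "Y = (\<lambda>i. avg e (F \<union> {1..i})) ` {0..K}"
  have YX: "Y \<subseteq> X"
  proof
    fix y assume "y \<in> Y"
    then obtain i where i: "i \<in> {0..K}" "y = avg e (F \<union> {1..i})" unfolding Y_def by auto
    have sub: "F \<union> {1..i} \<subseteq> {1..K}" using FR R i by auto
    have "card (R - (F \<union> {1..i})) \<le> card (R - F)" using finR by (intro card_mono) auto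
    also have "\<dots> = card R - card F" using FR finF by (simp add: card_Diff_subset)
    also have "\<dots> < j" using cF j by simp
    finally show "y \<in> X" unfolding X_def using sub i by blast
  qed
  have finX: "finite X"
  proof -
    have "X \<subseteq> avg e ` Pow {1..K}" unfolding X_def by auto
    thus ?thesis by (rule finite_subset) auto
  qed
  have Yne: "Y \<noteq> {}" "finite Y" unfolding Y_def by auto
  have key: "\<exists>y\<in>Y. y \<le> x" if "x \<in> X" for x
  proof -
    obtain I where I: "I \<subseteq> {1..K}" "card (R - I) < j" "x = avg e I"
      using \<open>x \<in> X\<close> unfolding X_def by auto
    have finI: "finite I" using I finite_subset by blast
    define G where "G = I \<inter> R"
    have "card R = card (R \<inter> I) + card (R - I)" using finR by (metis card_Int_Diff)
    hence cG: "card F \<le> card G" "card G \<le> card R" using I cF unfolding G_def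
      by (auto simp: Int_commute)
    define T1 where "T1 = remove_largest R (card R - card G)"
    have cT1: "card T1 = card G" unfolding T1_def using rl_card[OF finR] cG by simp
    have FT1: "F \<subseteq> T1" unfolding T1_def F_def using cG cF by (intro rl_mono) linarith
    have T1R: "T1 \<subseteq> R" unfolding T1_def by (rule rl_sub)
    have sT1: "sum e T1 \<le> sum e G"
      using exch[OF finR T1R _ cT1 _ monoS[OF R(2)]] rl_down[OF finR] unfolding T1_def G_def
      by (metis Int_lower2 T1_def)
    define I' where "I' = T1 \<union> (I - R)"
    have finT1: "finite T1" using T1R finR finite_subset by blast
    have disj: "T1 \<inter> (I - R) = {}" using T1R by auto
    have cI': "card I' = card I"
    proof -
      have "card I' = card T1 + card (I - R)" unfolding I'_def using disj finT1 finI
        by (simp add: card_Un_disjoint)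
      also have "\<dots> = card (I \<inter> R) + card (I - R)" using cT1 G_def by simp
      also have "\<dots> = card I" using finI by (metis card_Int_Diff)
      finally show ?thesis .
    qed
    have sI': "sum e I' \<le> sum e I"
    proof -
      have "sum e I' = sum e T1 + sum e (I - R)" unfolding I'_def using disj finT1 finI
        by (simp add: sum.union_disjoint)
      also have "\<dots> \<le> sum e (I \<inter> R) + sum e (I - R)" using sT1 G_def by simp
      also have "\<dots> = sum e I" using finI by (metis sum.Int_Diff)
      finally show ?thesis .
    qed
    have FI': "F \<subseteq> I'" using FT1 unfolding I'_def by auto
    have I'K: "I' \<subseteq> {1..K}" using T1R R I unfolding I'_def by auto
    define S where "S = {1..K} - F"
    define J where "J = I' - F"
    have finS: "finite S" unfolding S_def by simp
    have JS: "J \<subseteq> S" using I'K unfolding J_def S_def by auto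
    have cJ: "card J \<le> card S" using JS finS by (rule card_mono[rotated])
    define T where "T = remove_largest S (card S - card J)"
    have cT: "card T = card J" unfolding T_def using rl_card[OF finS] cJ by simp
    have TS: "T \<subseteq> S" unfolding T_def by (rule rl_sub)
    have dT: "\<forall>x\<in>T. \<forall>y\<in>S. y < x \<longrightarrow> y \<in> T" using rl_down[OF finS] unfolding T_def by blast
    have sT: "sum e T \<le> sum e J"
      using exch[OF finS TS JS cT dT monoS] unfolding S_def by auto
    define i where "i = (if T = {} then 0 else Max T)"
    have finT: "finite T" using TS finS finite_subset by blast
    have iK: "i \<in> {0..K}"
    proof (cases "T = {}")
      case False
      then have "Max T \<in> T" using finT by (intro Max_in) auto
      thus ?thesis using TS False unfolding i_def S_def by auto
    qed (simp add: i_def)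
    have eqU: "F \<union> {1..i} = F \<union> T"
    proof
      show "F \<union> T \<subseteq> F \<union> {1..i}"
      proof
        fix x assume "x \<in> F \<union> T"
        moreover have "x \<in> T \<Longrightarrow> x \<in> {1..i}"
        proof -
          assume xT: "x \<in> T"
          then have "x \<le> Max T" using finT by simp
          moreover have "1 \<le> x" using xT TS unfolding S_def by auto
          ultimately show ?thesis using xT unfolding i_def by auto
        qed
        ultimately show "x \<in> F \<union> {1..i}" by blast
      qed
      show "F \<union> {1..i} \<subseteq> F \<union> T"
      proof
        fix x assume x: "x \<in> F \<union> {1..i}"
        show "x \<in> F \<union> T"
        proof (cases "x \<in> F")
          case False
          then have xi: "x \<in> {1..i}" using x by auto
          then have Tne: "T \<noteq> {}" unfolding i_def by (auto split: if_splits)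
          then have MT: "Max T \<in> T" using finT by (intro Max_in) auto
          have "x \<in> S" using xi iK False unfolding S_def by auto
          moreover have "x \<le> Max T" using xi Tne unfolding i_def by auto
          ultimately have "x \<in> T" using dT MT by (metis le_neq_implies_less)
          thus ?thesis by simp
        qed simp
      qed
    qed
    have dFT: "F \<inter> T = {}" using TS unfolding S_def by auto
    have cU: "card (F \<union> T) = card I"
    proof -
      have "card (F \<union> T) = card F + card T" using dFT finF finT by (simp add: card_Un_disjoint)
      also have "\<dots> = card F + card (I' - F)" using cT J_def by simp
      also have "\<dots> = card I'" using FI' finF I'K
        by (metis card_Diff_subset card_mono finite_atLeastAtMost finite_subset le_add_diff_inverse)
      finally show ?thesis using cI' by simp
    qed
    have sU: "sum e (F \<union> T) \<le> sum e I"
    proof -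
      have "sum e (F \<union> T) = sum e F + sum e T" using dFT finF finT by (simp add: sum.union_disjoint)
      also have "\<dots> \<le> sum e F + sum e (I' - F)" using sT J_def by simp
      also have "\<dots> = sum e I'" using FI' finF I'K
        by (metis finite_atLeastAtMost finite_subset sum.subset_diff add.commute)
      finally show ?thesis using sI' by simp
    qed
    have "avg e (F \<union> {1..i}) \<le> x"
      unfolding I(3) avg_def eqU cU by (intro divide_right_mono sU) simp
    moreover have "avg e (F \<union> {1..i}) \<in> Y" unfolding Y_def using iK by auto
    ultimately show ?thesis by blast
  qed
  have "Min X = Min Y"
  proof (rule antisym)
    show "Min X \<le> Min Y" using YX Yne finX by (intro Min_antimono) auto
    have "Min X \<in> X" using finX YX Yne by (intro Min_in) auto
    then obtain y where "y \<in> Y" "y \<le> Min X" using key by blast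
    thus "Min Y \<le> Min X" using Yne by (meson Min_le order_trans)
  qed
  thus ?thesis unfolding AV_def X_def Y_def F_def by simp
qed


lemma prefix_mono:
  fixes K :: nat and e :: "nat \<Rightarrow> real"
  assumes mono: "\<forall>i j. 1 \<le> i \<longrightarrow> i \<le> j \<longrightarrow> j \<le> K \<longrightarrow> e i \<le> e j"
    and ab: "1 \<le> a" "a \<le> b" "b \<le> K"
  shows "avg e {1..a} \<le> avg e {1..b}"
  using ab(2,3)
proof (induction b rule: dec_induct)
  case base then show ?case by simp
next
  case (step n)
  have n1: "1 \<le> n" using ab step by simp
  have le: "sum e {1..n} \<le> of_nat (card {1..n}) * e (Suc n)"
    by (intro sum_bounded_above) (use mono step in auto)
  have "avg e {1..n} \<le> avg e {1..Suc n}"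
  proof -
    have "sum e {1..Suc n} = sum e {1..n} + e (Suc n)" by simp
    moreover have "sum e {1..n} \<le> real n * e (Suc n)" using le by simp
    ultimately show ?thesis unfolding avg_def using n1
      by (simp add: field_simps)
  qed
  thus ?case using step by simp
qed

lemma part2:
  fixes K :: nat and e :: "nat \<Rightarrow> real"
  assumes mono: "\<forall>i j. 1 \<le> i \<longrightarrow> i \<le> j \<longrightarrow> j \<le> K \<longrightarrow> e i \<le> e j"
    and rj: "1 \<le> r" "r \<le> K" "1 \<le> j" "j \<le> r"
  shows "AV K e {K - r + 1..K} j =
             Min ((\<lambda>i. ((\<Sum>k=1..i. e k) + (\<Sum>k=K-r+1..K-j+1. e k))
                        / (real i + real r - real j + 1)) ` {0..K - r})"
proof -
  define R where "R = {K - r + 1..K}"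
  define P where "P = {K - r + 1..K - j + 1}"
  have cR: "card R = r" unfolding R_def using rj by simp
  have rlP: "remove_largest R (j - 1) = P"
  proof -
    have c: "card {y\<in>R. x<y} = K - x" if "x \<in> R" for x
    proof -
      have "{y\<in>R. x<y} = {x+1..K}" using that unfolding R_def by auto
      thus ?thesis by simp
    qed
    show ?thesis unfolding remove_largest_def P_def using c rj unfolding R_def
      by (auto simp: R_def)
  qed
  have p1: "AV K e R j = Min ((\<lambda>i. avg e (P \<union> {1..i})) ` {0..K})"
    using part1[OF mono, of R j] rj cR rlP unfolding R_def by force
  define f where "f i = avg e (P \<union> {1..i})" for i
  define g where "g i = ((\<Sum>k=1..i. e k) + (\<Sum>k=K-r+1..K-j+1. e k))
                        / (real i + real r - real j + 1)" for i
  have fg: "f i = g i" if "i \<le> K - r" for i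
  proof -
    have d: "{1..i} \<inter> P = {}" using that unfolding P_def by auto
    have "sum e (P \<union> {1..i}) = sum e {1..i} + sum e P"
      using sum.union_disjoint[of "{1..i}" P e] d unfolding P_def by (simp add: Un_commute)
    moreover have "card (P \<union> {1..i}) = i + (K - j + 1 + 1 - (K - r + 1))" using d
      by (simp add: card_Un_disjoint Un_commute Int_commute P_def)
    moreover have "real (i + (K - j + 1 + 1 - (K - r + 1))) = real i + real r - real j + 1"
      using rj by (simp add: of_nat_diff)
    ultimately show ?thesis unfolding f_def g_def avg_def P_def by simp
  qed
  have big: "f (K - r) \<le> f i" if "K - r < i" "i \<le> K" for i
  proof -
    have "P \<union> {1..K - r} = {1..K - j + 1}" unfolding P_def using rj by auto
    moreover have "P \<union> {1..i} = {1..max i (K - j + 1)}" unfolding P_def using rj that by auto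
    ultimately show ?thesis unfolding f_def
      using prefix_mono[OF mono, of "K - j + 1" "max i (K - j + 1)"] rj that by auto
  qed
  have "Min (f ` {0..K}) = Min (f ` {0..K - r})"
  proof (rule antisym)
    show "Min (f ` {0..K}) \<le> Min (f ` {0..K - r})" by (intro Min_antimono) auto
    have "Min (f ` {0..K - r}) \<le> y" if yin: "y \<in> f ` {0..K}" for y
    proof -
      obtain i where i: "i \<in> {0..K}" "y = f i" using yin by auto
      show ?thesis
      proof (cases "i \<le> K - r")
        case True thus ?thesis using i by (intro Min_le) auto
      next
        case False
        have "Min (f ` {0..K - r}) \<le> f (K - r)" by (intro Min_le) auto
        also have "\<dots> \<le> f i" using big False i by auto
        finally show ?thesis using i by simp
      qed
    qed
    thus "Min (f ` {0..K - r}) \<le> Min (f ` {0..K})" by (intro Min.boundedI) auto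
  qed
  also have "f ` {0..K - r} = g ` {0..K - r}" using fg by (intro image_cong) auto
  finally show ?thesis using p1 unfolding R_def f_def g_def by simp
qed

theorem mainTheorem4:
  fixes K :: nat and e :: "nat \<Rightarrow> real"
  assumes "K \<ge> 2"
    and "\<forall>i\<in>{1..K}. 0 \<le> e i"
    and "\<forall>i j. 1 \<le> i \<longrightarrow> i \<le> j \<longrightarrow> j \<le> K \<longrightarrow> e i \<le> e j"
  shows "(\<forall>R j. R \<noteq> {} \<and> R \<subseteq> {1..K} \<and> 1 \<le> j \<and> j \<le> card R \<longrightarrow>
           AV K e R j = Min ((\<lambda>i. avg e (remove_largest R (j - 1) \<union> {1..i})) ` {0..K})) \<and>
         (\<forall>r j. 1 \<le> r \<and> r \<le> K \<and> 1 \<le> j \<and> j \<le> r \<longrightarrow>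
           AV K e {K - r + 1..K} j =
             Min ((\<lambda>i. ((\<Sum>k=1..i. e k) + (\<Sum>k=K-r+1..K-j+1. e k))
                        / (real i + real r - real j + 1)) ` {0..K - r}))"
  using part1[OF assms(3)] part2[OF assms(3)] by blast

end
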